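(* Let $L=(L;\wedge,\vee,{}^\ast,{}^\prime,0,1)$ be a pseudocomplemented de Morgan algebra and let $(P;\tau,\leq,\zeta)$ be its dual $pm$-space. Then $L$ is regular if and only if the poset $(P;\leq)$ has height at most $1$, i.e. every chain in $(P;\leq)$ has at most $2$ elements.
   Context: A pseudocomplemented de Morgan algebra ($pm$-algebra) is an algebra $(L;\wedge,\vee,{}^\ast,{}^\prime,0,1)$ such that $(L;\wedge,\vee,0,1)$ is a bounded distributive lattice, ${}^\ast$ is the pseudocomplement ($x\wedge y=0$ iff $y\le x^\ast$), and ${}^\prime$ is a de Morgan involution ($(x\vee y)'=x'\wedge y'$, $(x\wedge y)'=x'\vee y'$, $0'=1$, $1'=0$, $x''=x$). An algebra is regular if any two congruences on it having a common class are equal. A $pm$-space is $(P;\tau,\le,\zeta)$ where $(P;\tau,\le)$ is a Priestley space, $[X)$ is clopen for every clopen decreasing $X\subseteq P$, and $\zeta$ is a continuous order-reversing involution of $P$. The dual $pm$-space of $L$ is the set of prime ideals of $L$ ordered by inclusion, with the Priestley topology and $\zeta(I)=\{a\in L: a'\notin I\}$; $L$ is isomorphic to the algebra of clopen decreasing subsets of its dual space with $\cap,\cup,\emptyset,P$, $X^\ast=P\setminus[X)$ and $X'=P\setminus\zeta(X)$. *)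

theory Defs
  imports Main
begin

definition pm_algebra :: "('a::{bounded_lattice,distrib_lattice} \<Rightarrow> 'a) \<Rightarrow> ('a \<Rightarrow> 'a) \<Rightarrow> bool" where
  "pm_algebra pc neg \<longleftrightarrow>
     (\<forall>x y. inf x y = bot \<longleftrightarrow> y \<le> pc x) \<and>
     (\<forall>x y. neg (sup x y) = inf (neg x) (neg y)) \<and>
     (\<forall>x y. neg (inf x y) = sup (neg x) (neg y)) \<and>
     neg bot = top \<and> neg top = bot \<and>
     (\<forall>x. neg (neg x) = x)"

definition pm_congruence :: "('a::{bounded_lattice,distrib_lattice} \<Rightarrow> 'a) \<Rightarrow> ('a \<Rightarrow> 'a) \<Rightarrow> 'a rel \<Rightarrow> bool" where
  "pm_congruence pc neg \<theta> \<longleftrightarrow>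
     equiv UNIV \<theta> \<and>
     (\<forall>a b c d. (a, b) \<in> \<theta> \<longrightarrow> (c, d) \<in> \<theta> \<longrightarrow> (inf a c, inf b d) \<in> \<theta>) \<and>
     (\<forall>a b c d. (a, b) \<in> \<theta> \<longrightarrow> (c, d) \<in> \<theta> \<longrightarrow> (sup a c, sup b d) \<in> \<theta>) \<and>
     (\<forall>a b. (a, b) \<in> \<theta> \<longrightarrow> (pc a, pc b) \<in> \<theta>) \<and>
     (\<forall>a b. (a, b) \<in> \<theta> \<longrightarrow> (neg a, neg b) \<in> \<theta>)"

definition pm_regular :: "('a::{bounded_lattice,distrib_lattice} \<Rightarrow> 'a) \<Rightarrow> ('a \<Rightarrow> 'a) \<Rightarrow> bool" where
  "pm_regular pc neg \<longleftrightarrow>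
     (\<forall>\<theta> \<phi>. pm_congruence pc neg \<theta> \<and> pm_congruence pc neg \<phi> \<and>
        (\<exists>a b. \<theta> `` {a} = \<phi> `` {b}) \<longrightarrow> \<theta> = \<phi>)"

definition prime_ideal :: "'a::{bounded_lattice,distrib_lattice} set \<Rightarrow> bool" where
  "prime_ideal I \<longleftrightarrow>
     I \<noteq> {} \<and> I \<noteq> UNIV \<and>
     (\<forall>x y. x \<in> I \<longrightarrow> y \<le> x \<longrightarrow> y \<in> I) \<and>
     (\<forall>x y. x \<in> I \<longrightarrow> y \<in> I \<longrightarrow> sup x y \<in> I) \<and>
     (\<forall>x y. inf x y \<in> I \<longrightarrow> x \<in> I \<or> y \<in> I)"

text \<open>Underlying poset of the dual pm-space: prime ideals ordered by inclusion.
  Height at most 1: every chain has at most 2 elements.\<close>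

definition dual_points :: "'a::{bounded_lattice,distrib_lattice} set set" where
  "dual_points = {I. prime_ideal I}"

definition height_le_1 :: "'b set set \<Rightarrow> bool" where
  "height_le_1 P \<longleftrightarrow>
     (\<forall>C. C \<subseteq> P \<and> (\<forall>I\<in>C. \<forall>J\<in>C. I \<subseteq> J \<or> J \<subseteq> I) \<longrightarrow> finite C \<and> card C \<le> 2)"

end

theory Submission
  imports Defs
begin

definition is_ideal :: "'a::{bounded_lattice,distrib_lattice} set \<Rightarrow> bool" where
  "is_ideal J \<longleftrightarrow> J \<noteq> {} \<and> (\<forall>x y. x \<in> J \<longrightarrow> y \<le> x \<longrightarrow> y \<in> J) \<and>
     (\<forall>x y. x \<in> J \<longrightarrow> y \<in> J \<longrightarrow> sup x y \<in> J)"

lemma PIT: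
  fixes I F :: "'a::{bounded_lattice,distrib_lattice} set"
  assumes I: "is_ideal I"
    and Fne: "F \<noteq> {}" and Fup: "\<forall>x y. x \<in> F \<longrightarrow> x \<le> y \<longrightarrow> y \<in> F"
    and Finf: "\<forall>x y. x \<in> F \<longrightarrow> y \<in> F \<longrightarrow> inf x y \<in> F"
    and disj: "I \<inter> F = {}"
  shows "\<exists>P. prime_ideal P \<and> I \<subseteq> P \<and> P \<inter> F = {}"
proof -
  define S where "S = {J. is_ideal J \<and> I \<subseteq> J \<and> J \<inter> F = {}}"
  have "\<forall>C\<in>chains S. \<exists>U\<in>S. \<forall>X\<in>C. X \<subseteq> U"
  proof
    fix C assume C: "C \<in> chains S"
    show "\<exists>U\<in>S. \<forall>X\<in>C. X \<subseteq> U"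
    proof (cases "C = {}")
      case True
      then show ?thesis using I disj unfolding S_def by auto
    next
      case False
      have CS: "C \<subseteq> S" and ch: "\<forall>A\<in>C. \<forall>B\<in>C. A \<subseteq> B \<or> B \<subseteq> A"
        using C unfolding chains_def chain_subset_def by auto
      have "\<Union>C \<in> S"
        unfolding S_def is_ideal_def
      proof (intro CollectI conjI allI impI)
        show "\<Union>C \<noteq> {}" using False CS unfolding S_def is_ideal_def by blast
        show "I \<subseteq> \<Union>C" using False CS unfolding S_def by auto
        show "\<Union>C \<inter> F = {}" using CS unfolding S_def by auto
        fix x y
        { assume "x \<in> \<Union>C" "y \<le> x"
          then show "y \<in> \<Union>C" using CS unfolding S_def is_ideal_def by blast }
        { assume x: "x \<in> \<Union>C" and y: "y \<in> \<Union>C"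
          then obtain A B where A: "A \<in> C" "x \<in> A" and B: "B \<in> C" "y \<in> B" by auto
          from ch A B have "A \<subseteq> B \<or> B \<subseteq> A" by auto
          then show "sup x y \<in> \<Union>C"
          proof
            assume "A \<subseteq> B"
            then have "sup x y \<in> B" using A B CS unfolding S_def is_ideal_def by blast
            then show ?thesis using B by auto
          next
            assume "B \<subseteq> A"
            then have "sup x y \<in> A" using A B CS unfolding S_def is_ideal_def by blast
            then show ?thesis using A by auto
          qed }
      qed
      then show ?thesis by auto
    qed
  qed
  from Zorn_Lemma2[OF this] obtain M where MS: "M \<in> S" and Mmax: "\<forall>X\<in>S. M \<subseteq> X \<longrightarrow> X = M"
    by blast
  have Mi: "is_ideal M" "I \<subseteq> M" "M \<inter> F = {}" using MS unfolding S_def by auto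
  have down: "\<And>x y. x \<in> M \<Longrightarrow> y \<le> x \<Longrightarrow> y \<in> M" and supc: "\<And>x y. x \<in> M \<Longrightarrow> y \<in> M \<Longrightarrow> sup x y \<in> M"
    using Mi(1) unfolding is_ideal_def by blast+
  have ext: "\<exists>m\<in>M. \<exists>f\<in>F. f \<le> sup m x" if xM: "x \<notin> M" for x
  proof (rule ccontr)
    assume nex: "\<not> ?thesis"
    define Mx where "Mx = {z. \<exists>m\<in>M. z \<le> sup m x}"
    have "Mx \<in> S" unfolding S_def is_ideal_def
    proof (intro CollectI conjI allI impI)
      show "Mx \<noteq> {}" using Mi unfolding Mx_def is_ideal_def by auto
      show "I \<subseteq> Mx" using Mi unfolding Mx_def by (auto intro: le_supI1)
      show "Mx \<inter> F = {}" using nex Fup unfolding Mx_def by blast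
      fix z w
      { assume "z \<in> Mx" "w \<le> z" then show "w \<in> Mx" unfolding Mx_def using order_trans by blast }
      { assume "z \<in> Mx" "w \<in> Mx"
        then obtain m1 m2 where "m1 \<in> M" "z \<le> sup m1 x" "m2 \<in> M" "w \<le> sup m2 x"
          unfolding Mx_def by auto
        moreover have "sup z w \<le> sup (sup m1 m2) x"
        proof (rule sup_least)
          show "z \<le> sup (sup m1 m2) x" using calculation(2) by (rule order_trans) (simp add: le_supI1 sup_mono)
          show "w \<le> sup (sup m1 m2) x" using calculation(4) by (rule order_trans) (simp add: le_supI1 sup_mono)
        qed
        moreover have "sup m1 m2 \<in> M" using supc calculation(1,3) .
        ultimately show "sup z w \<in> Mx" unfolding Mx_def by blast }
    qed
    moreover have "M \<subseteq> Mx" unfolding Mx_def by (auto intro: sup_ge1)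
    moreover have "x \<in> Mx" unfolding Mx_def using Mi unfolding is_ideal_def by auto
    ultimately show False using Mmax xM by blast
  qed
  have "prime_ideal M" unfolding prime_ideal_def
  proof (intro conjI allI impI)
    show "M \<noteq> {}" using Mi unfolding is_ideal_def by auto
    show "M \<noteq> UNIV" using Mi Fne by auto
    show "\<And>x y. x \<in> M \<Longrightarrow> y \<le> x \<Longrightarrow> y \<in> M" by (rule down)
    show "\<And>x y. x \<in> M \<Longrightarrow> y \<in> M \<Longrightarrow> sup x y \<in> M" by (rule supc)
    fix x y assume xy: "inf x y \<in> M"
    show "x \<in> M \<or> y \<in> M"
    proof (rule ccontr)
      assume "\<not> (x \<in> M \<or> y \<in> M)"
      then obtain m1 f1 m2 f2 where h: "m1 \<in> M" "f1 \<in> F" "f1 \<le> sup m1 x"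
        "m2 \<in> M" "f2 \<in> F" "f2 \<le> sup m2 y" using ext by meson
      have "inf f1 f2 \<le> inf (sup (sup m1 m2) x) (sup (sup m1 m2) y)"
      proof (rule inf_mono)
        show "f1 \<le> sup (sup m1 m2) x" using h(3) by (rule order_trans) (simp add: le_supI1 sup_mono)
        show "f2 \<le> sup (sup m1 m2) y" using h(6) by (rule order_trans) (simp add: le_supI1 sup_mono)
      qed
      also have "\<dots> = sup (sup m1 m2) (inf x y)" by (rule sup_inf_distrib1[symmetric])
      finally have le: "inf f1 f2 \<le> sup (sup m1 m2) (inf x y)" .
      have "sup m1 m2 \<in> M" using supc h(1,4) .
      then have "sup (sup m1 m2) (inf x y) \<in> M" using supc xy by blast
      then have "inf f1 f2 \<in> M" using down le by blast
      moreover have "inf f1 f2 \<in> F" using Finf h(2,5) by blast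
      ultimately have "inf f1 f2 \<in> M \<inter> F" by blast
      then show False using Mi(3) by blast
    qed
  qed
  then show ?thesis using Mi(2,3) by blast
qed


locale pmalg =
  fixes pc neg :: "'a::{bounded_lattice,distrib_lattice} \<Rightarrow> 'a"
  assumes pm: "pm_algebra pc neg"
begin

lemmas pmd = pm[unfolded pm_algebra_def]
lemma pc_iff: "inf x y = bot \<longleftrightarrow> y \<le> pc x" using conjunct1[OF pmd] by blast
lemma neg_sup: "neg (sup x y) = inf (neg x) (neg y)" using conjunct1[OF conjunct2[OF pmd]] by blast
lemma neg_inf: "neg (inf x y) = sup (neg x) (neg y)" using conjunct1[OF conjunct2[OF conjunct2[OF pmd]]] by blast
lemma neg_bot: "neg bot = top" using conjunct1[OF conjunct2[OF conjunct2[OF conjunct2[OF pmd]]]] by blast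
lemma neg_top: "neg top = bot" using conjunct1[OF conjunct2[OF conjunct2[OF conjunct2[OF conjunct2[OF pmd]]]]] by blast
lemma neg_neg[simp]: "neg (neg x) = x" using conjunct2[OF conjunct2[OF conjunct2[OF conjunct2[OF conjunct2[OF pmd]]]]] by blast

lemma inf_pc[simp]: "inf x (pc x) = bot" using pc_iff by blast
lemma inf_pc2[simp]: "inf (pc x) x = bot" using inf_pc by (simp add: inf_commute)
lemma le_pcpc: "x \<le> pc (pc x)" using pc_iff inf_pc2 by blast
lemma pc_anti: "x \<le> y \<Longrightarrow> pc y \<le> pc x"
proof -
  assume "x \<le> y"
  then have "inf x (pc y) \<le> inf y (pc y)" by (rule inf_mono) simp
  then have "inf x (pc y) = bot" by (simp add: bot_unique)
  then show ?thesis using pc_iff by blast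
qed
lemma pc3[simp]: "pc (pc (pc x)) = pc x"
  by (rule antisym) (rule pc_anti[OF le_pcpc], rule le_pcpc)
lemma pc_bot[simp]: "pc bot = top" using pc_iff[of bot top] by (simp add: top_unique)
lemma pc_top[simp]: "pc top = bot" using inf_pc[of top] by (simp only: inf_top_left)
lemma pc_sup: "pc (sup x y) = inf (pc x) (pc y)"
proof (rule antisym)
  show "pc (sup x y) \<le> inf (pc x) (pc y)" by (simp add: pc_anti)
  have "inf (sup x y) (inf (pc x) (pc y)) = bot"
  proof -
    have a: "inf x (inf (pc x) (pc y)) = bot" by (simp add: inf_assoc[symmetric])
    have "inf y (inf (pc x) (pc y)) = inf (pc x) (inf y (pc y))" by (rule inf_left_commute)
    then have b: "inf y (inf (pc x) (pc y)) = bot" by simp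
    show ?thesis by (simp only: inf_sup_distrib2 a b sup_bot_left)
  qed
  then show "inf (pc x) (pc y) \<le> pc (sup x y)" using pc_iff by blast
qed
lemma pc_inf_abs: "inf x (pc (inf x y)) = inf x (pc y)"
proof (rule antisym)
  have "inf (inf x (pc (inf x y))) y = bot"
    by (metis inf_assoc inf_commute inf_pc)
  then have "inf x (pc (inf x y)) \<le> pc y" using pc_iff by (metis inf_commute)
  then show "inf x (pc (inf x y)) \<le> inf x (pc y)" by simp
  show "inf x (pc y) \<le> inf x (pc (inf x y))" by (simp add: le_infI2 pc_anti)
qed
lemma pc_inf: "pc (inf x y) = pc (inf (pc (pc x)) (pc (pc y)))"
proof (rule antisym)
  show "pc (inf (pc (pc x)) (pc (pc y))) \<le> pc (inf x y)"
    by (rule pc_anti) (rule inf_mono; rule le_pcpc)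
  define w where "w = pc (inf x y)"
  have L3: "\<And>a b. a \<le> pc b \<Longrightarrow> inf a (pc (pc b)) = bot"
  proof -
    fix a b assume "a \<le> pc b"
    then have "inf a (pc (pc b)) \<le> inf (pc b) (pc (pc b))" by (rule inf_mono) simp
    then show "inf a (pc (pc b)) = bot" by (simp add: bot_unique)
  qed
  have "inf (inf x y) w = bot" unfolding w_def by (rule inf_pc)
  then have "inf y (inf w x) = bot" by (simp add: inf_aci)
  then have "inf w x \<le> pc y" using pc_iff by blast
  then have "inf (inf w x) (pc (pc y)) = bot" by (rule L3)
  then have "inf x (inf w (pc (pc y))) = bot" by (simp add: inf_aci)
  then have "inf w (pc (pc y)) \<le> pc x" using pc_iff by blast
  then have "inf (inf w (pc (pc y))) (pc (pc x)) = bot" by (rule L3)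
  then have "inf (inf (pc (pc x)) (pc (pc y))) w = bot" by (simp add: inf_aci)
  then show "w \<le> pc (inf (pc (pc x)) (pc (pc y)))" using pc_iff by blast
qed

lemma neg_mono: "x \<le> y \<Longrightarrow> neg y \<le> neg x"
proof -
  assume "x \<le> y"
  then have "sup x y = y" by (rule sup_absorb2)
  then have "neg y = neg (sup x y)" by simp
  also have "\<dots> = inf (neg x) (neg y)" by (rule neg_sup)
  finally show ?thesis by (metis inf_le1)
qed

definition pl :: "'a \<Rightarrow> 'a" where "pl x = neg (pc (neg x))"

lemma sup_pl[simp]: "sup b (pl b) = top"
proof -
  have "sup b (pl b) = neg (inf (neg b) (pc (neg b)))" unfolding pl_def by (simp only: neg_inf neg_neg)
  also have "\<dots> = neg bot" by (simp only: inf_pc)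
  finally show ?thesis by (simp only: neg_bot)
qed
lemma pl_least: "sup b x = top \<Longrightarrow> pl b \<le> x"
proof -
  assume "sup b x = top"
  then have "inf (neg b) (neg x) = bot" using neg_sup[of b x] neg_top by metis
  then have "neg x \<le> pc (neg b)" using pc_iff by blast
  then have "neg (pc (neg b)) \<le> neg (neg x)" by (rule neg_mono)
  then show ?thesis unfolding pl_def by simp
qed


lemma cg_equiv: "pm_congruence pc neg \<theta> \<Longrightarrow> equiv UNIV \<theta>"
  unfolding pm_congruence_def by (rule conjunct1)
lemma cg_refl: "pm_congruence pc neg \<theta> \<Longrightarrow> (x, x) \<in> \<theta>"
  by (drule cg_equiv) (erule equivE, erule refl_onD, rule UNIV_I)
lemma cg_sym: "pm_congruence pc neg \<theta> \<Longrightarrow> (x, y) \<in> \<theta> \<Longrightarrow> (y, x) \<in> \<theta>"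
  by (drule cg_equiv) (erule equivE, erule symD)
lemma cg_trans: "pm_congruence pc neg \<theta> \<Longrightarrow> (x, y) \<in> \<theta> \<Longrightarrow> (y, z) \<in> \<theta> \<Longrightarrow> (x, z) \<in> \<theta>"
  by (drule cg_equiv) (erule equivE, erule transD)
lemma cg_inf: "pm_congruence pc neg \<theta> \<Longrightarrow> (a, b) \<in> \<theta> \<Longrightarrow> (c, d) \<in> \<theta> \<Longrightarrow> (inf a c, inf b d) \<in> \<theta>"
  unfolding pm_congruence_def by simp
lemma cg_sup: "pm_congruence pc neg \<theta> \<Longrightarrow> (a, b) \<in> \<theta> \<Longrightarrow> (c, d) \<in> \<theta> \<Longrightarrow> (sup a c, sup b d) \<in> \<theta>"
  unfolding pm_congruence_def by simp
lemma cg_pc: "pm_congruence pc neg \<theta> \<Longrightarrow> (a, b) \<in> \<theta> \<Longrightarrow> (pc a, pc b) \<in> \<theta>"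
  unfolding pm_congruence_def by simp
lemma cg_neg: "pm_congruence pc neg \<theta> \<Longrightarrow> (a, b) \<in> \<theta> \<Longrightarrow> (neg a, neg b) \<in> \<theta>"
  unfolding pm_congruence_def by simp

abbreviation idt :: bool where "idt \<equiv> (\<forall>a b. inf b (pl b) \<le> sup a (pc a))"

lemma half:
  assumes c: "pm_congruence pc neg \<phi>" and id: idt
    and h1: "(pc y, pc x) \<in> \<phi>" and h2: "(pl y, pl x) \<in> \<phi>"
  shows "(x, inf x y) \<in> \<phi>"
proof -
  have "inf x (sup y (pl y)) = x" by simp
  then have e1: "x = sup (inf x y) (inf x (pl y))" by (metis inf_sup_distrib1)
  have e2: "(inf x (pl y), inf x (pl x)) \<in> \<phi>" using cg_inf[OF c cg_refl[OF c] h2] .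
  define p where "p = inf x (pl x)"
  have "p \<le> sup y (pc y)" using id unfolding p_def by blast
  then have "p = inf p (sup y (pc y))" by (simp add: inf_absorb1)
  then have e3: "p = sup (inf p y) (inf p (pc y))" by (metis inf_sup_distrib1)
  have e4: "(inf p (pc y), inf p (pc x)) \<in> \<phi>" using cg_inf[OF c cg_refl[OF c] h1] .
  have "inf p (pc x) = inf (pl x) (inf x (pc x))" unfolding p_def by (simp only: inf_aci)
  also have "\<dots> = bot" by simp
  finally have "inf p (pc x) = bot" .
  then have "(sup (inf p y) (inf p (pc y)), sup (inf p y) bot) \<in> \<phi>"
    using cg_sup[OF c cg_refl[OF c] e4] by simp
  then have e5: "(p, inf p y) \<in> \<phi>" using e3 by simp
  have "(inf x (pl y), inf p y) \<in> \<phi>" using cg_trans[OF c e2 e5[unfolded p_def]] unfolding p_def .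
  then have "(sup (inf x y) (inf x (pl y)), sup (inf x y) (inf p y)) \<in> \<phi>"
    using cg_sup[OF c cg_refl[OF c]] by blast
  moreover have "sup (inf x y) (inf p y) = inf x y"
    unfolding p_def by (rule sup_absorb1, rule inf_mono) simp_all
  ultimately show ?thesis using e1 by simp
qed

lemma det:
  assumes c: "pm_congruence pc neg \<phi>" and id: idt
    and h1: "(pc x, pc y) \<in> \<phi>" and h2: "(pl x, pl y) \<in> \<phi>"
  shows "(x, y) \<in> \<phi>"
proof -
  have a: "(x, inf x y) \<in> \<phi>" using half[OF c id cg_sym[OF c h1] cg_sym[OF c h2]] .
  have b: "(y, inf y x) \<in> \<phi>" using half[OF c id h1 h2] .
  have "(inf x y, y) \<in> \<phi>" using cg_sym[OF c b] by (simp add: inf_commute)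
  then show ?thesis using cg_trans[OF c a] by blast
qed

lemma transfer_bot:
  assumes ct: "pm_congruence pc neg \<theta>" and cp: "pm_congruence pc neg \<phi>"
    and agree: "\<forall>z. (c, z) \<in> \<theta> \<longleftrightarrow> (c, z) \<in> \<phi>"
    and u: "(u, bot) \<in> \<theta>"
  shows "(u, bot) \<in> \<phi>"
proof -
  have t1: "(pc u, top) \<in> \<theta>" using cg_pc[OF ct u] by simp
  have "(inf c (pc u), inf c top) \<in> \<theta>" using cg_inf[OF ct cg_refl[OF ct] t1] .
  then have "(c, inf c (pc u)) \<in> \<theta>" using cg_sym[OF ct] by simp
  then have p1: "(c, inf c (pc u)) \<in> \<phi>" using agree by blast
  have t3: "(pc (pc u), bot) \<in> \<theta>" using cg_pc[OF ct t1] by simp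
  have "(sup c (pc (pc u)), sup c bot) \<in> \<theta>" using cg_sup[OF ct cg_refl[OF ct] t3] .
  then have "(c, sup c (pc (pc u))) \<in> \<theta>" using cg_sym[OF ct] by simp
  then have p2: "(c, sup c (pc (pc u))) \<in> \<phi>" using agree by blast
  have "(inf (pc (pc u)) (sup c (pc (pc u))), inf (pc (pc u)) c) \<in> \<phi>"
    using cg_inf[OF cp cg_refl[OF cp] cg_sym[OF cp p2]] .
  then have q1: "(pc (pc u), inf (pc (pc u)) c) \<in> \<phi>" by (simp add: inf_absorb1)
  have "(inf (pc (pc u)) c, inf (pc (pc u)) (inf c (pc u))) \<in> \<phi>"
    using cg_inf[OF cp cg_refl[OF cp] p1] .
  moreover have "inf (pc (pc u)) (inf c (pc u)) = inf c (inf (pc u) (pc (pc u)))" by (simp add: inf_aci)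
  ultimately have "(inf (pc (pc u)) c, bot) \<in> \<phi>" by simp
  then have q2: "(pc (pc u), bot) \<in> \<phi>" using cg_trans[OF cp q1] by blast
  have "(inf u (pc (pc u)), inf u bot) \<in> \<phi>" using cg_inf[OF cp cg_refl[OF cp] q2] .
  moreover have "inf u (pc (pc u)) = u" using le_pcpc by (rule inf_absorb1)
  ultimately show ?thesis by simp
qed

lemma D1:
  assumes ct: "pm_congruence pc neg \<theta>" and cp: "pm_congruence pc neg \<phi>"
    and agree: "\<forall>z. (c, z) \<in> \<theta> \<longleftrightarrow> (c, z) \<in> \<phi>"
    and xy: "(x, y) \<in> \<theta>"
  shows "(pc x, inf (pc x) (pc y)) \<in> \<phi>"
proof -
  have "(pc (pc y), pc (pc x)) \<in> \<theta>" using cg_pc[OF ct cg_pc[OF ct cg_sym[OF ct xy]]] .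
  then have "(inf (pc x) (pc (pc y)), inf (pc x) (pc (pc x))) \<in> \<theta>"
    using cg_inf[OF ct cg_refl[OF ct]] by blast
  then have "(inf (pc x) (pc (pc y)), bot) \<in> \<theta>" by simp
  then have "(inf (pc x) (pc (pc y)), bot) \<in> \<phi>" using transfer_bot[OF ct cp agree] by blast
  then have "(pc (inf (pc x) (pc (pc y))), top) \<in> \<phi>" using cg_pc[OF cp] by fastforce
  then have "(inf (pc x) (pc (inf (pc x) (pc (pc y)))), inf (pc x) top) \<in> \<phi>"
    using cg_inf[OF cp cg_refl[OF cp]] by blast
  then have "(inf (pc x) (pc y), pc x) \<in> \<phi>" by (simp add: pc_inf_abs)
  then show ?thesis using cg_sym[OF cp] by blast
qed

lemma transfer:
  assumes ct: "pm_congruence pc neg \<theta>" and cp: "pm_congruence pc neg \<phi>" and id: idt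
    and agree: "\<forall>z. (c, z) \<in> \<theta> \<longleftrightarrow> (c, z) \<in> \<phi>"
    and xy: "(x, y) \<in> \<theta>"
  shows "(x, y) \<in> \<phi>"
proof -
  have D: "(pc x, pc y) \<in> \<phi>" if "(x, y) \<in> \<theta>" for x y
  proof -
    have a: "(pc x, inf (pc x) (pc y)) \<in> \<phi>" using D1[OF ct cp agree that] .
    have b: "(pc y, inf (pc y) (pc x)) \<in> \<phi>" using D1[OF ct cp agree cg_sym[OF ct that]] .
    have "(inf (pc x) (pc y), pc y) \<in> \<phi>" using cg_sym[OF cp b] by (simp add: inf_commute)
    then show ?thesis using cg_trans[OF cp a] by blast
  qed
  have h1: "(pc x, pc y) \<in> \<phi>" using D[OF xy] .
  have "(pc (neg x), pc (neg y)) \<in> \<phi>" using D[OF cg_neg[OF ct xy]] .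
  then have h2: "(pl x, pl y) \<in> \<phi>" unfolding pl_def by (rule cg_neg[OF cp])
  show ?thesis using det[OF cp id h1 h2] .
qed

lemma idt_regular: assumes id: idt shows "pm_regular pc neg"
  unfolding pm_regular_def
proof (intro allI impI)
  fix \<theta> \<phi> :: "'a rel"
  assume "pm_congruence pc neg \<theta> \<and> pm_congruence pc neg \<phi> \<and> (\<exists>a b. \<theta> `` {a} = \<phi> `` {b})"
  then obtain a b where ct: "pm_congruence pc neg \<theta>" and cp: "pm_congruence pc neg \<phi>"
    and cl: "\<theta> `` {a} = \<phi> `` {b}" by blast
  have "a \<in> \<theta> `` {a}" using cg_refl[OF ct] by blast
  then have ba: "(b, a) \<in> \<phi>" using cl by blast
  have agree: "\<forall>z. (a, z) \<in> \<theta> \<longleftrightarrow> (a, z) \<in> \<phi>"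
  proof
    fix z
    have "(a, z) \<in> \<theta> \<longleftrightarrow> (b, z) \<in> \<phi>" using cl by blast
    also have "\<dots> \<longleftrightarrow> (a, z) \<in> \<phi>"
      using cg_trans[OF cp ba] cg_trans[OF cp cg_sym[OF cp ba]] by blast
    finally show "(a, z) \<in> \<theta> \<longleftrightarrow> (a, z) \<in> \<phi>" .
  qed
  have agree2: "\<forall>z. (a, z) \<in> \<phi> \<longleftrightarrow> (a, z) \<in> \<theta>" using agree by blast
  show "\<theta> = \<phi>"
  proof
    show "\<theta> \<subseteq> \<phi>" using transfer[OF ct cp id agree] by auto
    show "\<phi> \<subseteq> \<theta>" using transfer[OF cp ct id agree2] by auto
  qed
qed


section \<open>Regular implies the identity\<close>

definition Psi :: "'a rel" where
  "Psi = {(x, y). pc x = pc y \<and> pc (neg x) = pc (neg y)}"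

lemma pc_inf_eq:
  assumes "pc a = pc b" "pc c = pc d" shows "pc (inf a c) = pc (inf b d)"
proof -
  have "pc (inf a c) = pc (inf (pc (pc a)) (pc (pc c)))" by (rule pc_inf)
  also have "\<dots> = pc (inf (pc (pc b)) (pc (pc d)))" using assms by simp
  also have "\<dots> = pc (inf b d)" by (rule pc_inf[symmetric])
  finally show ?thesis .
qed

lemma Psi_cong: "pm_congruence pc neg Psi"
  unfolding pm_congruence_def
proof (intro conjI allI impI)
  show "equiv UNIV Psi" unfolding Psi_def equiv_def refl_on_def sym_def trans_def by auto
  fix a b c d
  assume ab: "(a, b) \<in> Psi"
  then have ab1: "pc a = pc b" and ab2: "pc (neg a) = pc (neg b)" unfolding Psi_def by auto
  show "(pc a, pc b) \<in> Psi" unfolding Psi_def using ab1 by simp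
  show "(neg a, neg b) \<in> Psi" unfolding Psi_def using ab1 ab2 by simp
  assume cd: "(c, d) \<in> Psi"
  then have cd1: "pc c = pc d" and cd2: "pc (neg c) = pc (neg d)" unfolding Psi_def by auto
  show "(inf a c, inf b d) \<in> Psi" unfolding Psi_def
    using pc_inf_eq[OF ab1 cd1] ab2 cd2 by (simp add: neg_inf pc_sup)
  show "(sup a c, sup b d) \<in> Psi" unfolding Psi_def
    using pc_inf_eq[OF ab2 cd2] ab1 cd1 by (simp add: neg_sup pc_sup)
qed

lemma Id_cong: "pm_congruence pc neg Id"
  unfolding pm_congruence_def equiv_def refl_on_def sym_def trans_def by auto

lemma Psi_bot: "Psi `` {bot} = Id `` {bot}"
proof -
  have "x = bot" if "(bot, x) \<in> Psi" for x
  proof -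
    have "pc x = top" using that unfolding Psi_def by simp
    then have "inf x top = bot" using inf_pc[of x] by simp
    then show ?thesis by simp
  qed
  moreover have "(bot, bot) \<in> Psi" unfolding Psi_def by simp
  ultimately show ?thesis by auto
qed

lemma regular_idt: assumes reg: "pm_regular pc neg" shows idt
proof (rule ccontr)
  assume "\<not> idt"
  then obtain a b where nle: "\<not> inf b (pl b) \<le> sup a (pc a)" by blast
  define y where "y = sup a (pc a)"
  define x where "x = sup (inf b (pl b)) y"
  have "Psi = Id" using reg Psi_cong Id_cong Psi_bot unfolding pm_regular_def by blast
  moreover have "(x, y) \<in> Psi"
  proof -
    have py: "pc y = bot" unfolding y_def by (simp add: pc_sup)
    have px: "pc x = bot" unfolding x_def by (simp add: pc_sup py)
    have nb: "pc (neg (inf b (pl b))) = bot"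
      unfolding pl_def by (simp add: neg_inf pc_sup)
    have "pc (neg x) = pc (inf (neg (inf b (pl b))) (neg y))" unfolding x_def by (simp add: neg_sup)
    also have "\<dots> = pc (inf (pc (pc (neg (inf b (pl b))))) (pc (pc (neg y))))" by (rule pc_inf)
    also have "\<dots> = pc (neg y)" by (simp add: nb)
    finally show ?thesis unfolding Psi_def using px py by simp
  qed
  ultimately have "x = y" by auto
  then have "inf b (pl b) \<le> y" unfolding x_def by (metis sup_ge1)
  then show False using nle unfolding y_def by simp
qed

section \<open>Chains and the identity\<close>

lemma pi_down: "prime_ideal I \<Longrightarrow> x \<in> I \<Longrightarrow> y \<le> x \<Longrightarrow> y \<in> I"
  unfolding prime_ideal_def by simp
lemma pi_sup: "prime_ideal I \<Longrightarrow> x \<in> I \<Longrightarrow> y \<in> I \<Longrightarrow> sup x y \<in> I"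
  unfolding prime_ideal_def by simp
lemma pi_prime: "prime_ideal I \<Longrightarrow> inf x y \<in> I \<Longrightarrow> x \<in> I \<or> y \<in> I"
  unfolding prime_ideal_def by simp
lemma pi_ne: "prime_ideal I \<Longrightarrow> I \<noteq> {}"
  unfolding prime_ideal_def by simp
lemma pi_nuniv: "prime_ideal I \<Longrightarrow> I \<noteq> UNIV"
  unfolding prime_ideal_def by simp

lemma prime_bot: "prime_ideal J \<Longrightarrow> bot \<in> J"
proof -
  assume J: "prime_ideal J"
  then obtain j where "j \<in> J" using pi_ne by blast
  then show "bot \<in> J" using pi_down[OF J] by simp
qed

lemma prime_top: "prime_ideal J \<Longrightarrow> top \<notin> J"
proof
  assume J: "prime_ideal J" and "top \<in> J"
  then have "\<forall>x. x \<in> J" using pi_down[OF J] top_greatest by blast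
  then show False using pi_nuniv[OF J] by blast
qed

lemma chain3_not_idt:
  fixes J I K :: "'a set"
  assumes J: "prime_ideal J" and I: "prime_ideal I" and K: "prime_ideal K"
    and JI: "J \<subset> I" and IK: "I \<subset> K"
  shows "\<not> idt"
proof -
  obtain a where a: "a \<in> I" "a \<notin> J" using JI by blast
  obtain b where b: "b \<in> K" "b \<notin> I" using IK by blast
  have "inf a (pc a) \<in> J" using prime_bot[OF J] by simp
  then have "pc a \<in> J" using a pi_prime[OF J] by blast
  then have "pc a \<in> I" using JI by blast
  then have ai: "sup a (pc a) \<in> I" using a pi_sup[OF I] by blast
  have "pl b \<notin> K"
  proof
    assume "pl b \<in> K"
    then have "sup b (pl b) \<in> K" using b pi_sup[OF K] by blast
    then show False using prime_top[OF K] by simp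
  qed
  then have "pl b \<notin> I" using IK by blast
  then have bi: "inf b (pl b) \<notin> I" using b pi_prime[OF I] by blast
  have "\<not> inf b (pl b) \<le> sup a (pc a)" using ai bi pi_down[OF I] by blast
  then show ?thesis by blast
qed

lemma three_elems:
  assumes "\<not> (finite C \<and> card C \<le> 2)"
  shows "\<exists>x y z. x \<in> C \<and> y \<in> C \<and> z \<in> C \<and> x \<noteq> y \<and> x \<noteq> z \<and> y \<noteq> z"
proof -
  have sub: "\<not> C \<subseteq> {x, y}" for x y
  proof
    assume "C \<subseteq> {x, y}"
    moreover have "card {x, y} \<le> 2" by (simp add: card_insert_if)
    ultimately have "finite C \<and> card C \<le> 2"
      by (meson card_mono finite.emptyI finite_insert finite_subset order_trans)
    then show False using assms by blast
  qed
  obtain x where x: "x \<in> C" using sub[of undefined undefined] by blast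
  obtain y where y: "y \<in> C" "y \<noteq> x" using sub[of x x] by blast
  obtain z where z: "z \<in> C" "z \<noteq> x" "z \<noteq> y" using sub[of x y] by blast
  show ?thesis using x y z by blast
qed

lemma order3:
  fixes A B C :: "'b set"
  assumes "A \<noteq> B" "A \<noteq> C" "B \<noteq> C"
    "A \<subseteq> B \<or> B \<subseteq> A" "A \<subseteq> C \<or> C \<subseteq> A" "B \<subseteq> C \<or> C \<subseteq> B"
  shows "\<exists>J I K. J \<in> {A, B, C} \<and> I \<in> {A, B, C} \<and> K \<in> {A, B, C} \<and> J \<subset> I \<and> I \<subset> K"
  using assms by blast

lemma regular_height: assumes reg: "pm_regular pc neg" shows "height_le_1 (dual_points :: 'a set set)"
  unfolding height_le_1_def
proof (intro allI impI)
  fix C :: "'a set set"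
  assume C: "C \<subseteq> dual_points \<and> (\<forall>I\<in>C. \<forall>J\<in>C. I \<subseteq> J \<or> J \<subseteq> I)"
  show "finite C \<and> card C \<le> 2"
  proof (rule ccontr)
    assume "\<not> (finite C \<and> card C \<le> 2)"
    from three_elems[OF this] obtain x y z where xyz: "x \<in> C" "y \<in> C" "z \<in> C" "x \<noteq> y" "x \<noteq> z" "y \<noteq> z"
      by blast
    have cmp: "\<forall>I\<in>C. \<forall>J\<in>C. I \<subseteq> J \<or> J \<subseteq> I" using C by (rule conjunct2)
    have "x \<subseteq> y \<or> y \<subseteq> x" "x \<subseteq> z \<or> z \<subseteq> x" "y \<subseteq> z \<or> z \<subseteq> y"
      using cmp xyz(1,2,3) by auto
    from order3[OF xyz(4,5,6) this] obtain J I K where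
      JIK0: "J \<in> {x, y, z}" "I \<in> {x, y, z}" "K \<in> {x, y, z}" "J \<subset> I" "I \<subset> K" by blast
    have sub: "{x, y, z} \<subseteq> C" using xyz(1,2,3) by simp
    have Cd: "C \<subseteq> dual_points" using C by (rule conjunct1)
    have JIK: "J \<in> C" "I \<in> C" "K \<in> C" "J \<subset> I" "I \<subset> K" using JIK0 sub by auto
    have "prime_ideal J" "prime_ideal I" "prime_ideal K"
      using JIK(1,2,3) Cd unfolding dual_points_def by auto
    from chain3_not_idt[OF this JIK(4,5)] regular_idt[OF reg] show False by (rule notE)
  qed
qed


section \<open>Height at most one implies the identity\<close>

lemma height_idt:
  assumes h: "height_le_1 (dual_points :: 'a set set)"
  shows idt
proof (rule ccontr)
  assume "\<not> idt"
  then obtain a b where nle: "\<not> inf b (pl b) \<le> sup a (pc a)" by blast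
  define u where "u = sup a (pc a)"
  define v where "v = inf b (pl b)"
  have nle': "\<not> v \<le> u" using nle unfolding u_def v_def .
  have i0: "is_ideal {z. z \<le> u}" unfolding is_ideal_def
    by (auto intro: order_trans)
  have "\<exists>P. prime_ideal P \<and> {z. z \<le> u} \<subseteq> P \<and> P \<inter> {z. v \<le> z} = {}"
  proof (rule PIT[OF i0])
    show "{z. v \<le> z} \<noteq> {}" by blast
    show "\<forall>x y. x \<in> {z. v \<le> z} \<longrightarrow> x \<le> y \<longrightarrow> y \<in> {z. v \<le> z}" by (auto intro: order_trans)
    show "\<forall>x y. x \<in> {z. v \<le> z} \<longrightarrow> y \<in> {z. v \<le> z} \<longrightarrow> inf x y \<in> {z. v \<le> z}" by auto
    show "{z. z \<le> u} \<inter> {z. v \<le> z} = {}" using nle' by (auto dest: order_trans)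
  qed
  then obtain I :: "'a set" where I: "prime_ideal I" and uI: "u \<in> I" and vI: "v \<notin> I" by blast
  have aI: "a \<in> I" and paI: "pc a \<in> I" using pi_down[OF I uI] unfolding u_def by auto
  have bI: "b \<notin> I" and pbI: "pl b \<notin> I" using pi_down[OF I] vI unfolding v_def by auto
  define G where "G = {z. \<exists>c. c \<notin> I \<and> inf c a \<le> z}"
  have i1: "is_ideal {bot :: 'a}" unfolding is_ideal_def by (auto simp: bot_unique)
  have topI: "top \<notin> I" using prime_top[OF I] .
  have "\<exists>P. prime_ideal P \<and> {bot} \<subseteq> P \<and> P \<inter> G = {}"
  proof (rule PIT[OF i1])
    show "G \<noteq> {}" unfolding G_def using topI by blast
    show "\<forall>x y. x \<in> G \<longrightarrow> x \<le> y \<longrightarrow> y \<in> G" unfolding G_def by (auto intro: order_trans)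
    show "\<forall>x y. x \<in> G \<longrightarrow> y \<in> G \<longrightarrow> inf x y \<in> G" unfolding G_def
    proof (intro allI impI)
      fix x y assume "x \<in> {z. \<exists>c. c \<notin> I \<and> inf c a \<le> z}" "y \<in> {z. \<exists>c. c \<notin> I \<and> inf c a \<le> z}"
      then obtain c1 c2 where c: "c1 \<notin> I" "inf c1 a \<le> x" "c2 \<notin> I" "inf c2 a \<le> y" by blast
      have "inf c1 c2 \<notin> I" using c pi_prime[OF I] by blast
      moreover have "inf (inf c1 c2) a \<le> inf x y"
      proof (rule le_infI)
        show "inf (inf c1 c2) a \<le> x" using c(2) by (rule order_trans[rotated]) (rule inf_mono, simp_all)
        show "inf (inf c1 c2) a \<le> y" using c(4) by (rule order_trans[rotated]) (rule inf_mono, simp_all)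
      qed
      ultimately show "inf x y \<in> {z. \<exists>c. c \<notin> I \<and> inf c a \<le> z}" by blast
    qed
    show "{bot} \<inter> G = {}"
    proof (rule ccontr)
      assume "{bot} \<inter> G \<noteq> {}"
      then obtain c where c: "c \<notin> I" "inf c a \<le> bot" unfolding G_def by blast
      then have "inf a c = bot" by (simp add: bot_unique inf_commute)
      then have "c \<le> pc a" using pc_iff by blast
      then show False using c(1) pi_down[OF I paI] by blast
    qed
  qed
  then obtain J :: "'a set" where J: "prime_ideal J" and JG: "J \<inter> G = {}" by blast
  have JI: "J \<subseteq> I"
  proof
    fix z assume zJ: "z \<in> J"
    show "z \<in> I"
    proof (rule ccontr)
      assume "z \<notin> I"
      then have "z \<in> G" unfolding G_def by auto
      then show False using zJ JG by blast
    qed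
  qed
  have "a \<in> G" unfolding G_def using topI by auto
  then have aJ: "a \<notin> J" using JG by blast
  define I2 where "I2 = {z. \<exists>i\<in>I. z \<le> sup i b}"
  have i2: "is_ideal I2" unfolding is_ideal_def
  proof (intro conjI allI impI)
    show "I2 \<noteq> {}" unfolding I2_def using aI by blast
    fix x y
    { assume "x \<in> I2" "y \<le> x" then show "y \<in> I2" unfolding I2_def by (auto intro: order_trans) }
    { assume "x \<in> I2" "y \<in> I2"
      then obtain i1 i2 where h: "i1 \<in> I" "x \<le> sup i1 b" "i2 \<in> I" "y \<le> sup i2 b"
        unfolding I2_def by blast
      have "sup x y \<le> sup (sup i1 i2) b"
      proof (rule sup_least)
        show "x \<le> sup (sup i1 i2) b" using h(2) by (rule order_trans) (simp add: le_supI1 sup_mono)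
        show "y \<le> sup (sup i1 i2) b" using h(4) by (rule order_trans) (simp add: le_supI1 sup_mono)
      qed
      moreover have "sup i1 i2 \<in> I" using pi_sup[OF I h(1,3)] .
      ultimately show "sup x y \<in> I2" unfolding I2_def by blast }
  qed
  have "\<exists>P. prime_ideal P \<and> I2 \<subseteq> P \<and> P \<inter> {top} = {}"
  proof (rule PIT[OF i2])
    show "{top :: 'a} \<noteq> {}" by blast
    show "\<forall>x y. x \<in> {top :: 'a} \<longrightarrow> x \<le> y \<longrightarrow> y \<in> {top}" by (auto simp: top_unique)
    show "\<forall>x y. x \<in> {top :: 'a} \<longrightarrow> y \<in> {top} \<longrightarrow> inf x y \<in> {top}" by auto
    show "I2 \<inter> {top} = {}"
    proof (rule ccontr)
      assume "I2 \<inter> {top} \<noteq> {}"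
      then obtain i where i: "i \<in> I" "top \<le> sup i b" unfolding I2_def by blast
      then have "sup b i = top" by (simp add: top_unique sup_commute)
      then have "pl b \<le> i" by (rule pl_least)
      then show False using pi_down[OF I i(1)] pbI by blast
    qed
  qed
  then obtain K :: "'a set" where K: "prime_ideal K" and I2K: "I2 \<subseteq> K" by blast
  have "I \<subseteq> I2"
  proof
    fix z assume "z \<in> I"
    moreover have "z \<le> sup z b" by (rule sup_ge1)
    ultimately show "z \<in> I2" unfolding I2_def by blast
  qed
  then have IK: "I \<subseteq> K" using I2K by (rule order_trans)
  have "b \<le> sup a b" by (rule sup_ge2)
  then have "b \<in> I2" unfolding I2_def using aI by blast
  then have bK: "b \<in> K" using I2K by blast
  have JI': "J \<noteq> I" using aI aJ by blast
  have IK': "I \<noteq> K" using bI bK by blast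
  have JK': "J \<noteq> K"
  proof
    assume "J = K"
    then have "b \<in> J" using bK by simp
    then show False using JI bI by blast
  qed
  have JK: "J \<subseteq> K" using JI IK by (rule order_trans)
  have "{J, I, K} \<subseteq> dual_points" using J I K unfolding dual_points_def by auto
  moreover have "\<forall>X\<in>{J, I, K}. \<forall>Y\<in>{J, I, K}. X \<subseteq> Y \<or> Y \<subseteq> X" by (simp add: JI IK JK)
  ultimately have ch: "{J, I, K} \<subseteq> dual_points \<and> (\<forall>X\<in>{J, I, K}. \<forall>Y\<in>{J, I, K}. X \<subseteq> Y \<or> Y \<subseteq> X)"
    by (rule conjI)
  have hh: "\<forall>C::'a set set. C \<subseteq> dual_points \<and> (\<forall>X\<in>C. \<forall>Y\<in>C. X \<subseteq> Y \<or> Y \<subseteq> X) \<longrightarrow> finite C \<and> card C \<le> 2"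
    using h unfolding height_le_1_def .
  have "finite {J, I, K} \<and> card {J, I, K} \<le> 2" using hh[rule_format, OF ch] .
  moreover have "card {J, I, K} = 3" using JI' IK' JK' by simp
  ultimately show False by simp
qed

end

theorem theorem3p1:
  fixes pc neg :: "'a::{bounded_lattice,distrib_lattice} \<Rightarrow> 'a"
  assumes "pm_algebra pc neg"
  shows "pm_regular pc neg \<longleftrightarrow> height_le_1 (dual_points :: 'a set set)"
proof -
  interpret pmalg pc neg using assms by (rule pmalg.intro)
  show ?thesis
  proof
    assume "pm_regular pc neg"
    then show "height_le_1 (dual_points :: 'a set set)" by (rule regular_height)
  next
    assume "height_le_1 (dual_points :: 'a set set)"
    then show "pm_regular pc neg" by (rule idt_regular[OF height_idt])
  qed
qed

end
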